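(* Let $q$ be a prime power and let $\mathcal{P}$ be a monic irreducible polynomial in $\mathbb{F}_q[T]$ of degree $m$. Then for every $n\in\mathbb{Z}_{\geqslant1}$, $\mathcal{P}$ is a c-Wieferich prime in $\mathbb{F}_q[T]$ if and only if $\mathcal{P}$ is a c-Wieferich prime in $\mathbb{F}_{q^{mn+1}}[T]$.
   Context: For a prime power $Q$, the Carlitz module over $\mathbb{F}_Q[T]$: for $N\in\mathbb{F}_Q[T]$, $\rho_N(X)$ is the additive polynomial determined by requiring $N\mapsto\rho_N$ to be an $\mathbb{F}_Q$-algebra homomorphism into additive polynomials (multiplication = composition) with $\rho_T(X)=X^Q+TX$. A monic irreducible $\mathcal{P}\in\mathbb{F}_Q[T]$ is a c-Wieferich prime in $\mathbb{F}_Q[T]$ if $\rho_{\mathcal{P}-1}(1)\equiv0\pmod{\mathcal{P}^2}$; it is known that this is equivalent to $F_{Q,\deg\mathcal{P}-1}\equiv0\pmod{\mathcal{P}}$, where $F_{Q,0}=1$ and $F_{Q,i}=(-1)^i+(T^{Q^i}-T)F_{Q,i-1}$. (Since $\gcd(m,mn+1)=1$, $\mathcal{P}$ remains irreducible over $\mathbb{F}_{q^{mn+1}}$.) *)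

theory Defs
  imports "HOL-Library.Cardinality" "HOL-Computational_Algebra.Polynomial" "HOL-Computational_Algebra.Polynomial_Factorial"
begin

text \<open>Carlitz module over F_Q[T], where F_Q is the finite field type 'a, Q = CARD('a).
  rho_T(X) = X^Q + T X; rho_N = sum_i c_i rho_T^(i) (composition powers) for N = sum_i c_i T^i,
  which is the unique F_Q-algebra homomorphism N to rho_N into additive polynomials.
  We only need the action on elements a of F_Q[T].\<close>

definition carlitz_T :: "'a::{finite,field} poly \<Rightarrow> 'a poly" where
  "carlitz_T a = a ^ CARD('a) + [:0, 1:] * a"

definition carlitz :: "'a::{finite,field} poly \<Rightarrow> 'a poly \<Rightarrow> 'a poly" where
  "carlitz N a = (\<Sum>i\<le>degree N. smult (coeff N i) ((carlitz_T ^^ i) a))"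

definition c_wieferich :: "'a::{finite,field} poly \<Rightarrow> bool" where
  "c_wieferich P \<longleftrightarrow> lead_coeff P = 1 \<and> irreducible P \<and> P ^ 2 dvd carlitz (P - 1) 1"

end

theory Submission imports Defs "Berlekamp_Zassenhaus.Distinct_Degree_Factorization" begin

lemma card_deg_less:
  assumes "n > 0"
  shows "card {x::'c::{finite,field} poly. degree x < n} = CARD('c) ^ n"
    and "finite {x::'c::{finite,field} poly. degree x < n}"
proof -
  let ?C = "{x::'c poly. degree x < n}"
  let ?h = "\<lambda>x::'c poly. \<lambda>i\<in>{..<n}. coeff x i"
  have bij: "bij_betw ?h ?C (PiE {..<n} (\<lambda>_. UNIV))"
  proof (rule bij_betwI')
    fix x y assume x: "x \<in> ?C" and y: "y \<in> ?C"
    show "(?h x = ?h y) = (x = y)"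
    proof
      assume h: "?h x = ?h y"
      show "x = y"
      proof (rule poly_eqI)
        fix i show "coeff x i = coeff y i"
        proof (cases "i < n")
          case True then show ?thesis using fun_cong[OF h, of i] by simp
        next
          case False then show ?thesis using x y by (simp add: coeff_eq_0)
        qed
      qed
    qed simp
  next
    fix x assume "x \<in> ?C" then show "?h x \<in> PiE {..<n} (\<lambda>_. UNIV)" by auto
  next
    fix g assume g: "g \<in> PiE {..<n} (\<lambda>_. UNIV :: 'c set)"
    define x where "x = Poly (map g [0..<n])"
    have cx: "coeff x i = (if i < n then g i else 0)" for i
      unfolding x_def by (simp add: nth_default_def)
    have "degree x < n"
    proof (cases "x = 0")
      case True then show ?thesis using assms by simp
    next
      case False
      then have "coeff x (degree x) \<noteq> 0" by simp
      then show ?thesis using cx by (metis)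
    qed
    moreover have "g = ?h x" using g cx by (auto simp: PiE_def extensional_def fun_eq_iff)
    ultimately show "\<exists>x\<in>?C. g = ?h x" by blast
  qed
  have "card ?C = card (PiE {..<n} (\<lambda>_. UNIV :: 'c set))" using bij_betw_same_card[OF bij] .
  also have "\<dots> = CARD('c) ^ n" by (simp add: card_PiE)
  finally show "card ?C = CARD('c) ^ n" .
  show "finite ?C" using bij_betw_finite[OF bij] by (simp add: finite_PiE)
qed

locale irrq =
  fixes f :: "'c::{finite,field} poly"
  assumes irr_f: "irreducible f"
begin

definition Rq :: "'c poly ring" where "Rq = \<lparr>carrier = {x::'c poly. degree x < degree f}, monoid.mult = (\<lambda>x y. x * y mod f), one = 1, zero = 0, add = (\<lambda>x y. (x + y) mod f)\<rparr>"

lemma degree_f[simp]: "degree f > 0"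
  using irr_f irreducible_connect_field irreducible\<^sub>dD(1) by blast

lemma prime_f: "prime_elem f" using irr_f by (rule field_poly_irreducible_imp_prime)

lemma fin_C: "finite {x::'c poly. degree x < degree f}" using card_deg_less(2)[OF degree_f, where 'c='c] .

lemma f_dvd_ab:
  "a = 0 \<or> b = 0" if "f dvd a * b" 
    and a: "degree a < degree f" 
    and b: "degree b < degree f" 
proof (rule ccontr)
  assume "\<not> (a = 0 \<or> b = 0)"
  then have "a \<noteq> 0" and "b \<noteq> 0"
    by simp_all
  with a b have "\<not> f dvd a" and "\<not> f dvd b"
    by (auto simp add: mod_poly_less dvd_eq_mod_eq_0)
  moreover from \<open>f dvd a * b\<close> prime_f have "f dvd a \<or> f dvd b"
    by (simp add: prime_elem_dvd_mult_iff)
  ultimately show False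
    by simp
qed

lemma ab_mod_f0:
  "a = 0 \<or> b = 0" if "a * b mod f = 0" 
    and a: "degree a < degree f" 
    and b: "degree b < degree f" 
  using that f_dvd_ab by auto

lemma deg_mod: "degree (x mod f) < degree f"
  by (metis degree_0 degree_f degree_mod_less' not_gr_zero)

lemma inv_exists:
  assumes x: "degree x < degree f" and x0: "x \<noteq> 0"
  shows "\<exists>y. degree y < degree f \<and> x * y mod f = 1"
proof -
  let ?C = "{x::'c poly. degree x < degree f}"
  let ?h = "\<lambda>y. x * y mod f"
  have "inj_on ?h ?C"
  proof (rule inj_onI)
    fix y z assume y: "y \<in> ?C" and z: "z \<in> ?C" and e: "?h y = ?h z"
    then have "f dvd x * y - x * z" by (metis mod_eq_dvd_iff)
    then have "f dvd x * (y - z)" by (simp add: algebra_simps)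
    moreover have "degree (y - z) < degree f" using y z
      by (simp add: degree_diff_less)
    ultimately have "x = 0 \<or> y - z = 0" using f_dvd_ab x by blast
    then show "y = z" using x0 by simp
  qed
  moreover have "?h ` ?C \<subseteq> ?C" using deg_mod by auto
  ultimately have "?h ` ?C = ?C" using endo_inj_surj[OF fin_C] by blast
  moreover have "(1::'c poly) \<in> ?C" by simp
  ultimately show ?thesis by (metis (no_types, lifting) imageE mem_Collect_eq)
qed

lemma times_mod_f_1_imp_0:
  assumes x: "degree x < degree f" 
    and x2: "\<forall>xa. x * xa mod f = 1 \<longrightarrow> \<not> degree xa < degree f"    
  shows "x = 0" 
  using inv_exists[OF x] x2 by blast

lemma field_Rq: "field Rq"
proof -
  have *: "\<exists>y. degree y < degree f \<and> f dvd x + y" if "degree x < degree f"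
    for x :: "'c poly"  
  proof -
    from that have "degree (- x) < degree f"
      by simp
    moreover have "f dvd (x + - x)"
      by simp
    ultimately show ?thesis
      by blast
  qed
  have **: "degree (x * y mod f) < degree f"
    if "degree x < degree f" and "degree y < degree f"
    for x y :: "'c poly"
    using that by (cases "x = 0 \<or> y = 0")
      (auto intro: degree_mod_less' dest: f_dvd_ab)
  show "field Rq"
    by standard (auto simp add: Rq_def Units_def algebra_simps degree_add_less mod_poly_less mod_add_eq mult_poly_add_left mod_mult_left_eq mod_mult_right_eq mod_eq_0_iff_dvd ab_mod_f0 * ** dest: times_mod_f_1_imp_0)
qed


lemma C_eq: "carrier Rq = {x::'c poly. degree x < degree f}" by (simp add: Rq_def)

lemma pow_Rq: assumes "x \<in> carrier Rq" shows "x [^]\<^bsub>Rq\<^esub> (k::nat) = x ^ k mod f"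
proof (induction k)
  case 0
  then show ?case by (simp add: Rq_def mod_poly_less)
next
  case (Suc k)
  have "x ^ Suc k mod f = (x ^ k mod f) * x mod f" by (metis mod_mult_left_eq power_Suc2)
  then show ?case using Suc by (simp add: Rq_def)
qed

lemma card_C: "card (carrier Rq) = CARD('c) ^ degree f"

  using card_deg_less(1)[OF degree_f, where 'c='c] by (simp add: C_eq)

lemma fin_Rq: "finite (carrier Rq)" using fin_C by (simp add: C_eq)

lemma order_mult: "order (mult_of Rq) = CARD('c) ^ degree f - 1"
proof -
  interpret F: field Rq by (rule field_Rq)
  show ?thesis using F.order_mult_of[OF fin_Rq] card_C by (simp add: order_def)
qed

lemma fermat_unit:
  assumes "\<not> f dvd a"
  shows "f dvd a ^ (CARD('c) ^ degree f - 1) - 1"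
proof -
  interpret F: field Rq by (rule field_Rq)
  let ?x = "a mod f"
  have xc: "?x \<in> carrier (mult_of Rq)" using assms deg_mod
    by (auto simp: C_eq Rq_def dvd_eq_mod_eq_0)
  have G: "group (mult_of Rq)" by (rule F.field_mult_group)
  have "?x [^]\<^bsub>mult_of Rq\<^esub> order (mult_of Rq) = \<one>\<^bsub>mult_of Rq\<^esub>"
    using group.pow_order_eq_1[OF G xc] by blast
  then have e: "?x [^]\<^bsub>Rq\<^esub> (CARD('c) ^ degree f - 1) = \<one>\<^bsub>Rq\<^esub>"
    by (simp add: nat_pow_mult_of order_mult)
  have xc': "?x \<in> carrier Rq" using xc by simp
  have "?x ^ (CARD('c) ^ degree f - 1) mod f = ?x [^]\<^bsub>Rq\<^esub> (CARD('c) ^ degree f - 1)"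
    using pow_Rq[OF xc'] by simp
  also have "\<dots> = 1" using e by (simp add: Rq_def)
  finally have "?x ^ (CARD('c) ^ degree f - 1) mod f = 1" .
  then have "a ^ (CARD('c) ^ degree f - 1) mod f = 1 mod f"
    by (simp add: power_mod mod_poly_less)
  then show ?thesis by (metis mod_eq_dvd_iff)
qed

lemma fermat_all: "f dvd a ^ (CARD('c) ^ degree f) - a"
proof (cases "f dvd a")
  case True
  have "CARD('c) ^ degree f > 0" by simp
  then obtain k where "CARD('c) ^ degree f = Suc k" using gr0_implies_Suc by blast
  then show ?thesis using True by (simp add: dvd_diff)
next
  case False
  have "CARD('c) ^ degree f = Suc (CARD('c) ^ degree f - 1)" by simp
  then have "a ^ (CARD('c) ^ degree f) - a = a * (a ^ (CARD('c) ^ degree f - 1) - 1)"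
    by (metis (no_types, lifting) mult.right_neutral power_Suc right_diff_distrib)
  then show ?thesis using fermat_unit[OF False] by simp
qed

lemma order_dvd:
  assumes "\<And>a. \<not> f dvd a \<Longrightarrow> f dvd a ^ u - 1"
  shows "CARD('c) ^ degree f - 1 dvd u"
proof -
  interpret F: field Rq by (rule field_Rq)
  obtain g where g: "g \<in> carrier (mult_of Rq)" and og: "group.ord (mult_of Rq) g = order (mult_of Rq)"
    using F.finite_field_mult_group_has_gen2[OF fin_Rq] by blast
  have G: "group (mult_of Rq)" by (rule F.field_mult_group)
  have gd: "degree g < degree f" "g \<noteq> 0" using g by (auto simp: C_eq Rq_def)
  then have "\<not> f dvd g" by (metis dvd_eq_mod_eq_0 mod_poly_less)
  then have "f dvd g ^ u - 1" by (rule assms)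
  then have "g ^ u mod f = 1 mod f" by (metis mod_eq_dvd_iff)
  then have "g [^]\<^bsub>mult_of Rq\<^esub> u = \<one>\<^bsub>mult_of Rq\<^esub>"
    using pow_Rq[of g] g by (simp add: nat_pow_mult_of Rq_def mod_poly_less)
  then have "group.ord (mult_of Rq) g dvd u" using group.pow_eq_id[OF G g] by blast
  then show ?thesis using og order_mult by simp
qed

end

lemma binom_sq:
  fixes P y b :: "'r::comm_ring_1"
  shows "\<exists>c. (y + P * b) ^ n = y ^ n + of_nat n * y ^ (n - 1) * P * b + P ^ 2 * c"
proof (induction n)
  case 0
  then show ?case by (rule exI[of _ 0]) simp
next
  case (Suc n)
  then obtain c where c: "(y + P * b) ^ n = y ^ n + of_nat n * y ^ (n - 1) * P * b + P ^ 2 * c" by blast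
  have e: "of_nat n * y * y ^ (n - 1) + y ^ n = of_nat (Suc n) * y ^ n"
  proof (cases n)
    case 0 then show ?thesis by simp
  next
    case (Suc k) then show ?thesis by (simp add: algebra_simps)
  qed
  have "(y + P * b) ^ Suc n = (y + P * b) * (y ^ n + of_nat n * y ^ (n - 1) * P * b + P ^ 2 * c)"
    using c by simp
  also have "\<dots> = y ^ Suc n + (of_nat n * y * y ^ (n - 1) + y ^ n) * P * b
       + P ^ 2 * (y * c + of_nat n * y ^ (n - 1) * b * b + P * b * c)"
    by (simp add: algebra_simps power2_eq_square)
  also have "\<dots> = y ^ Suc n + of_nat (Suc n) * y ^ (Suc n - 1) * P * b
       + P ^ 2 * (y * c + of_nat n * y ^ (n - 1) * b * b + P * b * c)"
    using e by simp
  finally show ?case by blast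
qed

lemma dvd_sq_power:
  fixes P x y :: "'r::comm_ring_1"
  assumes "of_nat n = (0::'r)" and "P dvd x - y"
  shows "P ^ 2 dvd x ^ n - y ^ n"
proof -
  obtain b where b: "x - y = P * b" using assms(2) by (auto simp: dvd_def)
  then have x: "x = y + P * b" by (simp add: algebra_simps)
  obtain c where "(y + P * b) ^ n = y ^ n + of_nat n * y ^ (n - 1) * P * b + P ^ 2 * c"
    using binom_sq by blast
  then have "x ^ n - y ^ n = P ^ 2 * c" using assms(1) x by simp
  then show ?thesis by simp
qed

lemma of_nat_card_field: "of_nat CARD('a::{finite,field}) = (0::'a)"
proof -
  have "(\<Sum>x\<in>(UNIV::'a set). x) = (\<Sum>x\<in>UNIV. x + 1)"
    by (rule sum.reindex_bij_witness[of _ "\<lambda>x. x + 1" "\<lambda>x. x - 1"]) auto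
  also have "\<dots> = (\<Sum>x\<in>UNIV. x) + of_nat CARD('a)"
    by (simp add: sum.distrib)
  finally show ?thesis by simp
qed

lemma of_nat_card_poly: "of_nat CARD('a::{finite,field}) = (0::'a poly)"
  by (simp add: of_nat_poly of_nat_card_field)

lemma dvd_power_diff: fixes x y :: "'r::comm_ring_1" shows "x - y dvd x ^ n - y ^ n"
  by (metis dvd_triv_left power_diff_sumr2)

lemma card_gt1: "CARD('a::{finite,field}) > 1"
proof -
  have "card {0::'a, 1} \<le> CARD('a)" by (rule card_mono) auto
  then show ?thesis by simp
qed

context irrq
begin

lemma fermat_iter: "f dvd a ^ (CARD('c) ^ (degree f * k)) - a"
proof (induction k)
  case 0
  then show ?case by simp
next
  case (Suc k)
  let ?b = "a ^ (CARD('c) ^ (degree f * k))"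
  have e: "CARD('c) ^ (degree f * Suc k) = CARD('c) ^ (degree f * k) * CARD('c) ^ degree f"
    by (simp add: power_add)
  have "a ^ (CARD('c) ^ (degree f * Suc k)) = ?b ^ (CARD('c) ^ degree f)"
    unfolding e by (simp only: power_mult)
  moreover have "f dvd ?b ^ (CARD('c) ^ degree f) - ?b" by (rule fermat_all)
  ultimately show ?case using Suc dvd_add[of f "?b ^ (CARD('c) ^ degree f) - ?b" "?b - a"]
    by simp
qed

lemma key_sq: "f ^ 2 dvd a ^ (CARD('c) ^ (degree f * k + 1)) - a ^ CARD('c)"
proof -
  have e: "CARD('c) ^ (degree f * k + 1) = CARD('c) ^ (degree f * k) * CARD('c)"
    by (simp add: power_add)
  have "a ^ (CARD('c) ^ (degree f * k + 1)) = (a ^ (CARD('c) ^ (degree f * k))) ^ CARD('c)"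
    unfolding e by (simp only: power_mult)
  then show ?thesis using dvd_sq_power[OF of_nat_card_poly fermat_iter[of a k]] by simp
qed

end


definition cTQ :: "nat \<Rightarrow> 'a::{finite,field} poly \<Rightarrow> 'a poly" where
  "cTQ Q a = a ^ Q + [:0, 1:] * a"

lemma iter_cong:
  fixes P :: "'a::{finite,field} poly"
  assumes H: "\<And>a. P ^ 2 dvd a ^ Q - a ^ CARD('a)"
  shows "P ^ 2 dvd (cTQ Q ^^ i) a - (carlitz_T ^^ i) a"
proof (induction i)
  case 0
  then show ?case by simp
next
  case (Suc i)
  let ?x = "(cTQ Q ^^ i) a" and ?y = "(carlitz_T ^^ i) a"
  have "(cTQ Q ^^ Suc i) a - (carlitz_T ^^ Suc i) a
     = (?x ^ Q - ?y ^ Q) + (?y ^ Q - ?y ^ CARD('a)) + [:0, 1:] * (?x - ?y)"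
    by (simp add: cTQ_def carlitz_T_def algebra_simps)
  moreover have "P ^ 2 dvd ?x ^ Q - ?y ^ Q"
    using Suc dvd_power_diff dvd_trans by blast
  moreover have "P ^ 2 dvd ?y ^ Q - ?y ^ CARD('a)" by (rule H)
  moreover have "P ^ 2 dvd [:0, 1:] * (?x - ?y)" using Suc by (rule dvd_mult)
  ultimately show ?case by (metis dvd_add)
qed

lemma map_iter:
  fixes f :: "'a::{finite,field} \<Rightarrow> 'b::{finite,field}"
  assumes "field_hom f"
  shows "map_poly f ((cTQ CARD('b) ^^ i) a) = (carlitz_T ^^ i) (map_poly f a)"
proof -
  interpret F: field_hom f by fact
  interpret M: map_poly_idom_hom f ..
  show ?thesis
  proof (induction i)
    case 0
    then show ?case by simp
  next
    case (Suc i)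
    have x: "map_poly f (pCons 0 y) = pCons 0 (map_poly f y)" for y by (rule poly_eqI) (simp add: coeff_map_poly coeff_pCons split: nat.split)
    show ?case using Suc by (simp add: cTQ_def carlitz_T_def M.hom_add M.hom_mult M.hom_power x)
  qed
qed

lemma map_carlitz:
  fixes f :: "'a::{finite,field} \<Rightarrow> 'b::{finite,field}"
  assumes "field_hom f"
  shows "map_poly f (\<Sum>i\<le>degree N. Polynomial.smult (coeff N i) ((cTQ CARD('b) ^^ i) a))
       = carlitz (map_poly f N) (map_poly f a)"
proof -
  interpret F: field_hom f by fact
  interpret M: map_poly_idom_hom f ..
  show ?thesis unfolding carlitz_def
    by (simp add: M.hom_sum map_iter[OF assms] F.map_poly_hom_smult coeff_map_poly)
qed


theorem theorem5p1:
  fixes P :: "'a::{finite,field} poly" and f :: "'a \<Rightarrow> 'b::{finite,field}" and n :: nat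
  assumes "lead_coeff P = 1" and "irreducible P"
    and "n \<ge> 1"
    and "CARD('b) = CARD('a) ^ (degree P * n + 1)"
    and "\<And>x y. f (x + y) = f x + f y" and "\<And>x y. f (x * y) = f x * f y" and "f 1 = 1"
  shows "c_wieferich P \<longleftrightarrow> c_wieferich (map_poly f P)"
proof -
  interpret I: irrq P by unfold_locales (rule assms(2))
  have f0: "f 0 = 0" using assms(5)[of 0 0] by (metis add.right_neutral add_left_cancel)
  have fh: "field_hom f" by unfold_locales (simp_all add: f0 assms(5-7))
  interpret F: field_hom f by (rule fh)
  interpret M: map_poly_idom_hom f ..
  let ?m = "degree P"
  have m0: "?m > 0" by (rule I.degree_f)
  have q1: "CARD('a) > 1" by (rule card_gt1)
  have H: "P ^ 2 dvd a ^ CARD('b) - a ^ CARD('a)" for a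
    using I.key_sq[of a n] assms(4) by simp
  define SQ where "SQ = (\<Sum>i\<le>degree (P - 1). Polynomial.smult (coeff (P - 1) i) ((cTQ CARD('b) ^^ i) 1))"
  have diff: "P ^ 2 dvd SQ - carlitz (P - 1) 1"
  proof -
    have "SQ - carlitz (P - 1) 1 = (\<Sum>i\<le>degree (P - 1). Polynomial.smult (coeff (P - 1) i)
            ((cTQ CARD('b) ^^ i) 1 - (carlitz_T ^^ i) 1))"
      unfolding SQ_def carlitz_def by (simp add: sum_subtractf smult_diff_right)
    also have "P ^ 2 dvd \<dots>"
    proof (rule dvd_sum)
      fix i
      have "P ^ 2 dvd (cTQ CARD('b) ^^ i) 1 - (carlitz_T ^^ i) 1" by (rule iter_cong[OF H])
      then show "P ^ 2 dvd Polynomial.smult (coeff (P - 1) i) ((cTQ CARD('b) ^^ i) 1 - (carlitz_T ^^ i) 1)"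
        by (rule dvd_smult)
    qed
    finally show ?thesis .
  qed
  have mapSQ: "map_poly f SQ = carlitz (map_poly f P - 1) 1"
    using map_carlitz[OF fh, of "P - 1" 1] unfolding SQ_def by (simp add: M.hom_minus)
  have dvd_iff: "(map_poly f P) ^ 2 dvd carlitz (map_poly f P - 1) 1 \<longleftrightarrow> P ^ 2 dvd carlitz (P - 1) 1"
  proof -
    have "(map_poly f P) ^ 2 dvd carlitz (map_poly f P - 1) 1 \<longleftrightarrow> map_poly f (P ^ 2) dvd map_poly f SQ"
      by (simp add: mapSQ M.hom_power)
    also have "\<dots> \<longleftrightarrow> P ^ 2 dvd SQ"
      using F.dvd_map_poly_hom_imp_dvd M.hom_dvd by blast
    also have "\<dots> \<longleftrightarrow> P ^ 2 dvd carlitz (P - 1) 1"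
      using diff dvd_add_right_iff[of "P ^ 2" "SQ - carlitz (P - 1) 1" "carlitz (P - 1) 1"]
      by (simp add: dvd_add_right_iff)
    finally show ?thesis .
  qed
  have irrb: "irreducible (map_poly f P)"
  proof (rule ccontr)
    assume nirr: "\<not> irreducible (map_poly f P)"
    have degPb: "degree (map_poly f P) = ?m" by simp
    from nirr have "\<not> irreducible\<^sub>d (map_poly f P)" by simp
    then obtain q0 r where q0: "degree q0 > 0" "degree q0 < ?m" "map_poly f P = q0 * r"
      using m0 degPb by (metis reducible\<^sub>dE less_not_refl)
    obtain g r' where g: "irreducible g" "q0 = g * r'"
      using irreducible_monic_factor[OF q0(1)] by blast
    interpret G: irrq g by unfold_locales (rule g(1))
    define d where "d = degree g"
    have d0: "d > 0" unfolding d_def by (rule G.degree_f)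
    have q0nz: "q0 \<noteq> 0" using q0(1) by auto
    have "d \<le> degree q0" unfolding d_def using g(2) q0nz by (simp add: dvd_imp_degree_le)
    then have dm: "d < ?m" using q0(2) by simp
    have gdvd: "g dvd map_poly f P" using q0(3) g(2) by simp
    have claim1: "P dvd b" if gb: "g dvd map_poly f b" for b
    proof (rule ccontr)
      assume nb: "\<not> P dvd b"
      let ?N = "CARD('a) ^ ?m - 1"
      have N0: "?N > 0" using one_less_power[OF q1 m0] by simp
      have "P dvd b ^ ?N - 1" by (rule I.fermat_unit[OF nb])
      then have "map_poly f P dvd map_poly f (b ^ ?N - 1)" by (rule M.hom_dvd)
      then have "g dvd (map_poly f b) ^ ?N - 1" using gdvd by (simp add: M.hom_minus M.hom_power dvd_trans)
      moreover have "map_poly f b dvd (map_poly f b) ^ ?N" using N0 by (simp add: dvd_power)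
      then have "g dvd (map_poly f b) ^ ?N" using gb dvd_trans by blast
      ultimately have "g dvd (map_poly f b) ^ ?N - ((map_poly f b) ^ ?N - 1)" by (rule dvd_diff[rotated])
      then have "g dvd 1" by simp
      then show False using G.degree_f by (simp add: d_def)
    qed
    have claim2: "P dvd b ^ (CARD('b) ^ d - 1) - 1" if nb: "\<not> P dvd b" for b
    proof -
      have "\<not> g dvd map_poly f b" using claim1 nb by blast
      then have "g dvd (map_poly f b) ^ (CARD('b) ^ d - 1) - 1" using G.fermat_unit d_def by simp
      then have "g dvd map_poly f (b ^ (CARD('b) ^ d - 1) - 1)" by (simp add: M.hom_minus M.hom_power)
      then show ?thesis by (rule claim1)
    qed
    have "CARD('a) ^ ?m - 1 dvd CARD('b) ^ d - 1" by (rule I.order_dvd[OF claim2])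
    moreover have "CARD('b) ^ d = CARD('a) ^ ((?m * n + 1) * d)"
      unfolding assms(4) by (rule power_mult[symmetric])
    ultimately have "CARD('a) ^ ?m - 1 dvd CARD('a) ^ ((?m * n + 1) * d) - 1" by simp
    then have "?m dvd (?m * n + 1) * d"
      using dvd_power_minus_1_conv1[OF q1 m0] d0 by simp
    moreover have "(?m * n + 1) * d = ?m * (n * d) + d" by (simp add: algebra_simps)
    ultimately have h: "?m dvd ?m * (n * d) + d" by metis
    have "?m dvd ?m * (n * d)" by simp
    then have "?m dvd d" using h by (simp only: dvd_add_right_iff)
    then show False using d0 dm by (simp add: nat_dvd_not_less)
  qed
  have lc: "lead_coeff (map_poly f P) = 1" using assms(1) assms(7) by simp
  show ?thesis
    unfolding c_wieferich_def using assms(1,2) irrb lc dvd_iff by blast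
qed

end
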